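(* Consider MALIQUOT. Then, for all $n$, $\mathcal{SG}(n) = \Omega(n)$.
   Context: MALIQUOT is the impartial normal-play game whose positions are the positive integers, where from $n$ a player moves to a proper divisor of $n$, i.e. $\mathrm{opt}(n)=\{d: d\mid n,\ 0<d<n\}$; the player unable to move loses. $\mathcal{SG}$ denotes the Sprague-Grundy (nim-)value, $\mathcal{SG}(n)=\mathrm{mex}\{\mathcal{SG}(x):x\in\mathrm{opt}(n)\}$. $\Omega(n)$ is the number of prime factors of $n$ counted with multiplicity. *)

theory Defs
  imports Main "HOL-Computational_Algebra.Primes"
begin

definition maliquot_opt :: "nat \<Rightarrow> nat set" where
  "maliquot_opt n = {d. d dvd n \<and> 0 < d \<and> d < n}"

definition mex :: "nat set \<Rightarrow> nat" where
  "mex S = (LEAST m. m \<notin> S)"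

function SG :: "nat \<Rightarrow> nat" where
  "SG n = mex ((\<lambda>d. if d < n then SG d else 0) ` maliquot_opt n)"
  by auto
termination by (relation "measure id") auto

definition bigOmega :: "nat \<Rightarrow> nat" where
  "bigOmega n = size (prime_factorization n)"

end

theory Submission
  imports Defs
begin

lemma sub_size: "k \<le> size (P::'a multiset) \<Longrightarrow> \<exists>M. M \<subseteq># P \<and> size M = k"
proof (induction P arbitrary: k)
  case empty then show ?case by auto
next
  case (add x P)
  show ?case
  proof (cases "k \<le> size P")
    case True
    then obtain M where "M \<subseteq># P" "size M = k" using add.IH by blast
    then show ?thesis proof -
      have "P \<subseteq># add_mset x P"
        by (metis (no_types) add_mset_add_single mset_subset_eq_add_left)
      then show ?thesis using \<open>M \<subseteq># P\<close> \<open>size M = k\<close> subset_mset.order_trans by blast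
    qed
  next
    case False
    then have "k = size (add_mset x P)" using add.prems by simp
    then show ?thesis by blast
  qed
qed

lemma omega_lt:
  assumes "d dvd n" "0 < d" "d < (n::nat)"
  shows "bigOmega d < bigOmega n"
proof -
  have n0: "n \<noteq> 0" using assms by auto
  have sub: "prime_factorization d \<subseteq># prime_factorization n"
    using assms n0 by (simp add: prime_factorization_subset_iff_dvd)
  have "prime_factorization d \<noteq> prime_factorization n"
  proof
    assume "prime_factorization d = prime_factorization n"
    then have "prod_mset (prime_factorization d) = prod_mset (prime_factorization n)" by simp
    then have "d = n" using assms n0 by (simp add: prod_mset_prime_factorization_nat)
    then show False using assms by simp
  qed
  then have "prime_factorization d \<subset># prime_factorization n" using sub by simp
  then show ?thesis unfolding bigOmega_def by (simp add: mset_subset_size)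
qed

lemma omega_ex:
  assumes "0 < (n::nat)" "k < bigOmega n"
  shows "\<exists>d. d dvd n \<and> 0 < d \<and> d < n \<and> bigOmega d = k"
proof -
  obtain M where M: "M \<subseteq># prime_factorization n" "size M = k"
    using sub_size[of k "prime_factorization n"] assms unfolding bigOmega_def by auto
  define d where "d = prod_mset M"
  have pr: "\<And>p. p \<in># M \<Longrightarrow> prime p"
    using M(1) by (meson in_prime_factors_imp_prime mset_subset_eqD)
  have pf: "prime_factorization d = M"
    unfolding d_def using pr by (simp add: prime_factorization_prod_mset_primes)
  have d0: "d \<noteq> 0" unfolding d_def using pr by (metis not_prime_0 prod_mset_zero_iff)
  have dvd: "d dvd n"
    using M(1) pf d0 assms(1) prime_factorization_subset_iff_dvd[of d n] by auto
  have "d \<noteq> n" using pf M assms unfolding bigOmega_def by auto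
  then have "d < n" using dvd assms(1) dvd_imp_le le_neq_implies_less by blast
  then show ?thesis using dvd d0 pf M unfolding bigOmega_def by auto
qed

declare SG.simps[simp del]

lemma mex_range: "mex {0..<m} = m"
  unfolding mex_def by (rule Least_equality) auto

theorem mainTheorem1:
  fixes n :: nat
  assumes "0 < n"
  shows "SG n = bigOmega n"
  using assms
proof (induction n rule: less_induct)
  case (less n)
  have "(\<lambda>d. if d < n then SG d else 0) ` maliquot_opt n = {0..<bigOmega n}"
  proof (intro equalityI subsetI)
    fix x assume "x \<in> (\<lambda>d. if d < n then SG d else 0) ` maliquot_opt n"
    then obtain d where d: "d dvd n" "0 < d" "d < n" "x = SG d"
      unfolding maliquot_opt_def by auto
    then show "x \<in> {0..<bigOmega n}" using less.IH omega_lt by auto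
  next
    fix x assume "x \<in> {0..<bigOmega n}"
    then obtain d where d: "d dvd n" "0 < d" "d < n" "bigOmega d = x"
      using omega_ex less.prems by auto
    then have "x = (\<lambda>d. if d < n then SG d else 0) d" using less.IH by auto
    moreover have "d \<in> maliquot_opt n" using d unfolding maliquot_opt_def by auto
    ultimately show "x \<in> (\<lambda>d. if d < n then SG d else 0) ` maliquot_opt n" by blast
  qed
  then show ?case by (subst SG.simps) (simp add: mex_range)
qed

end
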